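(* Let $q\ge1$ and $k\ge2$ be integers, and for $1\le t\le q$ let $\boldsymbol{\alpha}_t=(\alpha_{t,1},\dots,\alpha_{t,k})$ with $0<\alpha_{t,1},\dots,\alpha_{t,k}<1$ and $\alpha_{t,1}+\cdots+\alpha_{t,k}=1$. There exist constants $C,N$ depending only on $k$, $q$ and $(\boldsymbol\alpha_t)_{1\le t\le q}$ such that the following holds. For all integers $n\ge N$, $d\ge1$, all $g_1,\dots,g_{k-1}\in\mathbb{Z}$ and all integers $0\le i_1,\dots,i_q\le n$ with $i_1+\cdots+i_q=n$, $$\Bigg|\sum\prod_{t=1}^q P_{i_t,\mathbf{s}_t,\boldsymbol{\alpha}_t}-\frac{1}{d^{k-1}}\Bigg|\le C\,\frac{\log n}{\sqrt n},$$ where the sum is over all integer vectors $\mathbf{s}_t=(s_{t,1},\dots,s_{t,k})$, $1\le t\le q$, with $0\le s_{t,1},\dots,s_{t,k}\le i_t$, $s_{t,1}+\cdots+s_{t,k}=i_t$ for every $t$, and $s^{(a)}\equiv g_a\pmod d$ for $a=1,\dots,k-1$, with $s^{(a)}:=s_{1,a}+\cdots+s_{q,a}$.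
   Context: For nonnegative integers $n,u_1,\dots,u_k$ with $u_1+\cdots+u_k=n$, $\mathbf{u}=(u_1,\dots,u_k)$ and $\boldsymbol\alpha=(\alpha_1,\dots,\alpha_k)$, $P_{n,\mathbf{u},\boldsymbol\alpha}:=\frac{n!}{u_1!\cdots u_k!}\alpha_1^{u_1}\cdots\alpha_k^{u_k}$ (the multinomial coefficient being $1$ when $n=0$). *)

theory Defs
  imports Complex_Main "HOL-Number_Theory.Cong"
begin

text \<open>Multinomial probability P_{n,u,alpha} for a vector u = (u 0, ..., u (k-1))
  and alpha = (alpha 0, ..., alpha (k-1)) (indices shifted to start at 0).\<close>
definition multP :: "nat \<Rightarrow> nat \<Rightarrow> (nat \<Rightarrow> nat) \<Rightarrow> (nat \<Rightarrow> real) \<Rightarrow> real" where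
  "multP k n u \<alpha> = fact n / (\<Prod>a<k. fact (u a)) * (\<Prod>a<k. \<alpha> a ^ u a)"

text \<open>Families s_t = (s t 0, ..., s t (k-1)), t < q, of nonnegative integer vectors with
  s t 0 + ... + s t (k-1) = i t; entries outside the index range are fixed to 0
  (so the set is finite and each family is represented exactly once).\<close>
definition comp_families :: "nat \<Rightarrow> nat \<Rightarrow> (nat \<Rightarrow> nat) \<Rightarrow> (nat \<Rightarrow> nat \<Rightarrow> nat) set" where
  "comp_families q k i = {s. (\<forall>t a. \<not> (t < q \<and> a < k) \<longrightarrow> s t a = 0) \<and>
                             (\<forall>t<q. (\<Sum>a<k. s t a) = i t)}"

end

theory Submission
  imports Defs
begin

lemma one_minus_cos_lb0:
  fixes y :: real assumes "0 \<le> y" "y \<le> 2"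
  shows "y^2 / 3 \<le> 1 - cos y"
proof (cases "y = 0")
  case True then show ?thesis by simp
next
  case False
  then have "y > 0" using assms by simp
  from Maclaurin_cos_expansion2[OF this, of 4] obtain t where
    t: "cos y = (\<Sum>m<4. cos_coeff m * y ^ m) + (cos (t + 1/2 * real 4 * pi) / fact 4) * y ^ 4"
    by auto
  have s: "(\<Sum>m<4. cos_coeff m * y ^ m) = 1 - y^2/2"
    by (simp add: lessThan_nat_numeral cos_coeff_def fact_numeral)
  have f: "(fact 4 :: real) = 24" by (simp add: fact_numeral)
  have y4: "y^4 \<ge> 0" by simp
  have "cos (t + 1/2 * real 4 * pi) / fact 4 * y ^ 4 \<le> y^4/24"
    using mult_right_mono[OF cos_le_one[of t] y4] by (simp add: f)
  then have "cos y \<le> 1 - y^2/2 + y^4/24"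
    using t s by linarith
  moreover have y22: "y^2 \<le> 4"
    using assms power_mono[of y 2 2] by simp
  have e4: "y^4 = y^2 * y^2" by algebra
  have "y^4 \<le> 4 * y^2" unfolding e4 by (rule mult_right_mono[OF y22]) simp
  then show ?thesis using \<open>cos y \<le> 1 - y^2/2 + y^4/24\<close> by linarith
qed

lemma one_minus_cos_lb:
  fixes y :: real assumes "0 \<le> y" "y \<le> pi"
  shows "y^2 / 12 \<le> 1 - cos y"
proof -
  define z where "z = y / 2"
  have z: "0 \<le> z" "z \<le> 2" "z \<le> pi/2" using assms pi_less_4 by (auto simp: z_def)
  have cz: "0 \<le> cos z" using z by (intro cos_ge_zero) auto
  have "cos y = 2 * cos z ^ 2 - 1" using cos_double_cos[of z] by (simp add: z_def)
  then have "1 - cos y = 2 * (1 - cos z) * (1 + cos z)" by (simp add: algebra_simps power2_eq_square)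
  also have "\<dots> \<ge> 2 * (1 - cos z) * 1" using cz cos_le_one[of z]
    by (intro mult_left_mono) auto
  also have "2 * (1 - cos z) * 1 = 2 * (1 - cos z)" by simp
  finally have A: "2 * (1 - cos z) \<le> 1 - cos y" .
  have Bz: "z^2/3 \<le> 1 - cos z" using one_minus_cos_lb0[OF z(1,2)] .
  have e: "y^2/12 = z^2/3" by (simp add: z_def power2_eq_square)
  have "0 \<le> 1 - cos z" using cos_le_one[of z] by simp
  then have F: "1 - cos z \<le> 2 * (1 - cos z)" by simp
  have "y^2/12 \<le> 1 - cos z" using Bz e by simp
  also note F
  also note A
  finally show ?thesis .
qed

definition Fam :: "nat \<Rightarrow> 'b \<Rightarrow> (nat \<Rightarrow> 'b set) \<Rightarrow> (nat \<Rightarrow> 'b) set" where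
  "Fam q z A = {s. (\<forall>t. q \<le> t \<longrightarrow> s t = z) \<and> (\<forall>t<q. s t \<in> A t)}"

lemma Fam_0: "Fam 0 z A = {\<lambda>_. z}"
  by (auto simp: Fam_def)

lemma Fam_Suc: "Fam (Suc q) z A = (\<lambda>(s,x). s(q:=x)) ` (Fam q z A \<times> A q)"
proof (intro equalityI subsetI)
  fix s assume "s \<in> Fam (Suc q) z A"
  then have "s = (\<lambda>(s,x). s(q:=x)) (s(q:=z), s q)" and "(s(q:=z), s q) \<in> Fam q z A \<times> A q"
    by (auto simp: Fam_def less_Suc_eq)
  then show "s \<in> (\<lambda>(s,x). s(q:=x)) ` (Fam q z A \<times> A q)" by blast
next
  fix s assume "s \<in> (\<lambda>(s,x). s(q:=x)) ` (Fam q z A \<times> A q)"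
  then show "s \<in> Fam (Suc q) z A" by (auto simp: Fam_def less_Suc_eq)
qed

lemma Fam_inj: "inj_on (\<lambda>(s,x). s(q:=x)) (Fam q z A \<times> A q)"
proof (rule inj_onI, clarify)
  fix s x s' x'
  assume "s \<in> Fam q z A" "s' \<in> Fam q z A" "s(q := x) = s'(q := x')"
  then have uk: "s q = z" "s' q = z" and eq: "\<And>a. (s(q := x)) a = (s'(q := x')) a"
    by (auto simp: Fam_def)
  have "x = x'" using eq[of q] by simp
  moreover have "s a = s' a" for a
    using eq[of a] uk by (cases "a = q") auto
  ultimately show "s = s' \<and> x = x'" by auto
qed

lemma Fam_finite: "(\<forall>t<q. finite (A t)) \<Longrightarrow> finite (Fam q z A)"
proof (induction q)
  case 0 then show ?case by (simp add: Fam_0)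
next
  case (Suc q)
  then have "finite (Fam q z A)" by simp
  then show ?case using Suc.prems by (simp add: Fam_Suc)
qed

lemma Fam_sum_prod:
  fixes f :: "nat \<Rightarrow> 'b \<Rightarrow> 'c::comm_semiring_1"
  assumes "\<forall>t<q. finite (A t)"
  shows "(\<Sum>s\<in>Fam q z A. \<Prod>t<q. f t (s t)) = (\<Prod>t<q. \<Sum>x\<in>A t. f t x)"
using assms proof (induction q)
  case 0 then show ?case by (simp add: Fam_0)
next
  case (Suc q)
  have fin: "finite (Fam q z A)" by (rule Fam_finite) (use Suc.prems in auto)
  have fin2: "finite (A q)" using Suc.prems by auto
  have "(\<Sum>s\<in>Fam (Suc q) z A. \<Prod>t<Suc q. f t (s t))
      = (\<Sum>p\<in>Fam q z A \<times> A q. \<Prod>t<Suc q. f t (((fst p)(q:=snd p)) t))"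
    unfolding Fam_Suc by (subst sum.reindex[OF Fam_inj]) (simp add: case_prod_beta)
  also have "\<dots> = (\<Sum>p\<in>Fam q z A \<times> A q. (\<Prod>t<q. f t (fst p t)) * f q (snd p))"
    by (intro sum.cong refl) (simp add: lessThan_Suc mult_ac)
  also have "\<dots> = (\<Sum>s\<in>Fam q z A. \<Prod>t<q. f t (s t)) * (\<Sum>x\<in>A q. f q x)"
    by (simp add: sum_product sum.cartesian_product case_prod_beta)
  also have "\<dots> = (\<Prod>t<Suc q. \<Sum>x\<in>A t. f t x)"
    using Suc by simp
  finally show ?case .
qed

definition U :: "nat \<Rightarrow> nat \<Rightarrow> (nat \<Rightarrow> nat) set" where
  "U k m = {u. (\<forall>a. k \<le> a \<longrightarrow> u a = 0) \<and> (\<Sum>a<k. u a) = m}"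

lemma U_finite: "finite (U k m)"
proof (rule finite_subset)
  show "U k m \<subseteq> Fam k 0 (\<lambda>_. {..m})"
  proof
    fix u assume u: "u \<in> U k m"
    have "u a \<le> m" if "a < k" for a
      using u that member_le_sum[of a "{..<k}" u] by (auto simp: U_def)
    then show "u \<in> Fam k 0 (\<lambda>_. {..m})" using u by (auto simp: U_def Fam_def)
  qed
  show "finite (Fam k 0 (\<lambda>_. {..m}))" by (rule Fam_finite) auto
qed

lemma U_0: "U 0 m = (if m = 0 then {\<lambda>_. 0} else {})"
  by (auto simp: U_def)

lemma U_Suc: "U (Suc k) m = (\<lambda>(j,u). u(k:=j)) ` (SIGMA j:{..m}. U k (m-j))"
proof (intro equalityI subsetI)
  fix v assume v: "v \<in> U (Suc k) m"
  then have "(\<Sum>a<k. v a) + v k = m" by (simp add: U_def)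
  then have "v = (\<lambda>(j,u). u(k:=j)) (v k, v(k:=0))" and "(v k, v(k:=0)) \<in> (SIGMA j:{..m}. U k (m-j))"
    using v by (auto simp: U_def)
  then show "v \<in> (\<lambda>(j,u). u(k:=j)) ` (SIGMA j:{..m}. U k (m-j))" by blast
next
  fix v assume "v \<in> (\<lambda>(j,u). u(k:=j)) ` (SIGMA j:{..m}. U k (m-j))"
  then obtain j u where "j \<le> m" "u \<in> U k (m-j)" "v = u(k:=j)" by auto
  then show "v \<in> U (Suc k) m" by (auto simp: U_def)
qed

lemma U_inj: "inj_on (\<lambda>(j,u). u(k:=j)) (SIGMA j:{..m}. U k (m-j))"
proof (rule inj_onI, clarify)
  fix j u j' u'
  assume "u \<in> U k (m-j)" "u' \<in> U k (m-j')" "u(k := j) = u'(k := j')"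
  then have uk: "u k = 0" "u' k = 0" and eq: "\<And>a. (u(k := j)) a = (u'(k := j')) a"
    by (auto simp: U_def)
  have "j = j'" using eq[of k] by simp
  moreover have "u a = u' a" for a
    using eq[of a] uk by (cases "a = k") auto
  ultimately show "j = j' \<and> u = u'" by auto
qed

lemma multinomial:
  fixes z :: "nat \<Rightarrow> complex"
  shows "(\<Sum>a<k. z a)^m = (\<Sum>u\<in>U k m. (fact m / (\<Prod>a<k. fact (u a))) * (\<Prod>a<k. z a ^ u a))"
proof (induction k arbitrary: m)
  case 0 then show ?case by (simp add: U_0)
next
  case (Suc k)
  define G where "G j u = (fact m / (\<Prod>a<Suc k. fact ((u(k:=j)) a))) * (\<Prod>a<Suc k. z a ^ (u(k:=j)) a)"
    for j and u :: "nat \<Rightarrow> nat"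
  have "(\<Sum>u\<in>U (Suc k) m. (fact m / (\<Prod>a<Suc k. fact (u a))) * (\<Prod>a<Suc k. z a ^ u a))
     = (\<Sum>p\<in>(SIGMA j:{..m}. U k (m-j)). G (fst p) (snd p))"
    unfolding U_Suc by (subst sum.reindex[OF U_inj]) (simp add: case_prod_beta G_def)
  also have "\<dots> = (\<Sum>j\<le>m. \<Sum>u\<in>U k (m-j). G j u)"
    using sum.Sigma[of "{..m}" "\<lambda>j. U k (m-j)" G] by (simp add: U_finite case_prod_beta)
  also have "\<dots> = (\<Sum>j\<le>m. \<Sum>u\<in>U k (m-j). of_nat (m choose j) * z k ^ j *
         ((fact (m-j) / (\<Prod>a<k. fact (u a))) * (\<Prod>a<k. z a ^ u a)))"
  proof (intro sum.cong refl)
    fix j u assume j: "j \<in> {..m}" and u: "u \<in> U k (m-j)"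
    have p1: "(\<Prod>a<Suc k. fact ((u(k:=j)) a) :: complex) = (\<Prod>a<k. fact (u a)) * fact j"
      by (simp add: lessThan_Suc)
    have p2: "(\<Prod>a<Suc k. z a ^ (u(k:=j)) a) = (\<Prod>a<k. z a ^ u a) * z k ^ j"
      by (simp add: lessThan_Suc)
    have b: "(of_nat (m choose j) :: complex) = fact m / (fact j * fact (m - j))"
      using j binomial_fact[of j m] by simp
    have nz: "(\<Prod>a<k. fact (u a) :: complex) \<noteq> 0" by simp
    show "G j u =
         of_nat (m choose j) * z k ^ j * (fact (m - j) / (\<Prod>a<k. fact (u a)) * (\<Prod>a<k. z a ^ u a))"
      unfolding G_def p1 p2 b using nz by (simp add: field_simps)
  qed
  also have "\<dots> = (\<Sum>j\<le>m. of_nat (m choose j) * z k ^ j * (\<Sum>a<k. z a) ^ (m - j))"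
    by (simp add: Suc.IH sum_distrib_left)
  also have "\<dots> = (z k + (\<Sum>a<k. z a)) ^ m" by (simp add: binomial_ring)
  also have "\<dots> = (\<Sum>a<Suc k. z a) ^ m" by (simp add: add.commute)
  finally show ?case by simp
qed

definition E :: "real \<Rightarrow> complex" where "E x = cis (2 * pi * x)"

lemma E_add: "E (x + y) = E x * E y"
  by (simp add: E_def cis_mult distrib_left)

lemma E_nat_mult: "E (real n * x) = E x ^ n"
  by (simp add: E_def DeMoivre mult.left_commute)

lemma E_int: "E (of_int m) = 1"
  unfolding E_def by (rule cis_multiple_2pi) simp

lemma E_0: "E 0 = 1" by (simp add: E_def)

lemma norm_E [simp]: "norm (E x) = 1" by (simp add: E_def)

lemma Re_E: "Re (E x) = cos (2 * pi * x)" by (simp add: E_def)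

lemma E_eq_1: assumes "E x = 1" shows "\<exists>m::int. x = of_int m"
proof -
  have "Re (E x) = 1" using assms by simp
  then have "cos (2 * pi * x) = 1" by (simp add: E_def)
  then obtain n :: int where "2 * pi * x = n * 2 * pi" by (auto simp: cos_one_2pi_int)
  then have "x = n" by simp
  then show ?thesis by blast
qed

lemma ind_char:
  fixes m :: int and d :: nat assumes d: "d \<ge> 1"
  shows "(if int d dvd m then 1 else 0 :: complex) = (1 / of_nat d) * (\<Sum>j<d. E (real j * (of_int m / real d)))"
proof (cases "int d dvd m")
  case True
  then obtain c where c: "m = int d * c" by auto
  have "E (real j * (of_int m / real d)) = 1" for j
  proof -
    have "real j * (of_int m / real d) = of_int (int j * c)"
      using d by (simp add: c)
    then show ?thesis by (simp only: E_int)
  qed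
  then have "(\<Sum>j<d. E (real j * (of_int m / real d))) = of_nat d"
    by simp
  then show ?thesis using True d by simp
next
  case False
  define w where "w = E (of_int m / real d)"
  have w1: "w \<noteq> 1"
  proof
    assume "w = 1"
    then obtain c :: int where "of_int m / real d = of_int c" using E_eq_1[of "of_int m / real d"] w_def \<open>w = 1\<close> by auto
    then have "of_int m = (of_int (int d * c) :: real)" using d by (simp add: field_simps)
    then have "m = int d * c" by linarith
    then show False using False by simp
  qed
  have wd: "w ^ d = 1"
    unfolding w_def E_nat_mult[symmetric] using d by (simp add: E_int)
  have "(\<Sum>j<d. E (real j * (of_int m / real d))) = (\<Sum>j<d. w ^ j)"
    unfolding w_def E_nat_mult[symmetric] by simp
  also have "\<dots> = 0" using geometric_sum[OF w1, of d] wd by simp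
  finally show ?thesis using False by simp
qed


lemma comp_families_Fam: "comp_families q k i = Fam q (\<lambda>_. 0) (\<lambda>t. U k (i t))"
  unfolding comp_families_def Fam_def U_def by (auto simp: fun_eq_iff; metis not_le)

lemma prod_ind:
  assumes "finite A"
  shows "(\<Prod>a\<in>A. (if C a then 1 else 0 :: 'c::comm_semiring_1)) = (if \<forall>a\<in>A. C a then 1 else 0)"
  using assms by (induction A rule: finite_induct) auto

lemma E_sum: "finite A \<Longrightarrow> E (\<Sum>a\<in>A. f a) = (\<Prod>a\<in>A. E (f a))"
  by (induction A rule: finite_induct) (auto simp: E_0 E_add)

lemma multP_E:
  fixes r :: "nat \<Rightarrow> nat" and \<alpha> :: "nat \<Rightarrow> real"
  shows "complex_of_real (multP k m u \<alpha>) * (\<Prod>a<k. E (real (r a) / real d) ^ u a)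
     = (fact m / (\<Prod>a<k. fact (u a))) * (\<Prod>a<k. (complex_of_real (\<alpha> a) * E (real (r a) / real d)) ^ u a)"
  by (simp add: multP_def power_mult_distrib prod.distrib)

lemma char_expansion:
  fixes q k d :: nat and \<alpha> :: "nat \<Rightarrow> nat \<Rightarrow> real" and g :: "nat \<Rightarrow> int" and i :: "nat \<Rightarrow> nat"
  assumes d: "d \<ge> 1" and k: "k \<ge> 1"
  shows "complex_of_real (\<Sum>s\<in>{s\<in>comp_families q k i. \<forall>a<k-1. [int (\<Sum>t<q. s t a) = g a] (mod int d)}.
            \<Prod>t<q. multP k (i t) (s t) (\<alpha> t))
     = (1 / of_nat d ^ (k-1)) * (\<Sum>r\<in>Fam (k-1) 0 (\<lambda>_. {..<d}).
          E (- (\<Sum>a<k-1. real (r a) * of_int (g a)) / real d) *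
          (\<Prod>t<q. (\<Sum>a<k. complex_of_real (\<alpha> t a) * E (real (r a) / real d)) ^ i t))"
proof -
  define K where "K = k - 1"
  have kK: "k = Suc K" using k by (simp add: K_def)
  define F where "F = comp_families q k i"
  define R where "R = Fam K (0::nat) (\<lambda>_. {..<d})"
  define S where "S s a = (\<Sum>t<q. s t a)" for s :: "nat \<Rightarrow> nat \<Rightarrow> nat" and a
  define MP where "MP s = (\<Prod>t<q. multP k (i t) (s t) (\<alpha> t))" for s
  have finF: "finite F" unfolding F_def comp_families_Fam by (rule Fam_finite) (simp add: U_finite)
  have finR: "finite R" unfolding R_def by (rule Fam_finite) simp
  have "complex_of_real (\<Sum>s\<in>{s\<in>F. \<forall>a<K. [int (S s a) = g a] (mod int d)}. MP s)
      = (\<Sum>s\<in>F. complex_of_real (MP s) * (\<Prod>a<K. (if int d dvd (int (S s a) - g a) then 1 else 0)))"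
    unfolding sum.inter_filter[OF finF] of_real_sum
    by (intro sum.cong refl) (auto simp: prod_ind Ball_def cong_iff_dvd_diff)
  also have "\<dots> = (\<Sum>s\<in>F. complex_of_real (MP s) *
        (\<Prod>a<K. (1 / of_nat d) * (\<Sum>j<d. E (real j * (of_int (int (S s a) - g a) / real d)))))"
    by (simp add: ind_char[OF d])
  also have "\<dots> = (\<Sum>s\<in>F. complex_of_real (MP s) * ((1 / of_nat d ^ K) *
        (\<Sum>r\<in>R. \<Prod>a<K. E (real (r a) * (of_int (int (S s a) - g a) / real d)))))"
  proof (intro sum.cong refl)
    fix s
    let ?f = "\<lambda>a j. E (real j * (of_int (int (S s a) - g a) / real d))"
    have "(\<Prod>a<K. (1 / of_nat d) * (\<Sum>j<d. ?f a j)) = (\<Prod>a<K. (1 / of_nat d :: complex)) * (\<Prod>a<K. \<Sum>j<d. ?f a j)"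
      by (rule prod.distrib)
    also have "(\<Prod>a<K. \<Sum>j<d. ?f a j) = (\<Sum>r\<in>R. \<Prod>a<K. ?f a (r a))"
      unfolding R_def by (rule Fam_sum_prod[symmetric]) simp
    finally show "complex_of_real (MP s) * (\<Prod>a<K. (1 / of_nat d) * (\<Sum>j<d. ?f a j)) =
        complex_of_real (MP s) * ((1 / of_nat d ^ K) * (\<Sum>r\<in>R. \<Prod>a<K. ?f a (r a)))"
      by (simp add: power_one_over)
  qed
  also have "\<dots> = (1 / of_nat d ^ K) * (\<Sum>r\<in>R. \<Sum>s\<in>F. complex_of_real (MP s) *
        (\<Prod>a<K. E (real (r a) * (of_int (int (S s a) - g a) / real d))))"
    by (simp add: sum_distrib_left sum.swap[of _ F R] mult_ac)
  also have "\<dots> = (1 / of_nat d ^ K) * (\<Sum>r\<in>R.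
          E (- (\<Sum>a<K. real (r a) * of_int (g a)) / real d) *
          (\<Prod>t<q. (\<Sum>a<k. complex_of_real (\<alpha> t a) * E (real (r a) / real d)) ^ i t))"
  proof (intro arg_cong2[where f = "(*)"] refl sum.cong)
    fix r assume r: "r \<in> R"
    have rK: "r K = 0" using r by (simp add: R_def Fam_def)
    have e1: "(\<Prod>a<K. E (real (r a) * (of_int (int (S s a) - g a) / real d))) =
          E (- (\<Sum>a<K. real (r a) * of_int (g a)) / real d) * (\<Prod>t<q. \<Prod>a<k. E (real (r a) / real d) ^ s t a)"
      for s
    proof -
      have "E (real (r a) * (of_int (int (S s a) - g a) / real d)) =
            E (- (real (r a) * of_int (g a)) / real d) * (\<Prod>t<q. E (real (r a) / real d) ^ s t a)" for a
      proof -
        have "real (r a) * (of_int (int (S s a) - g a) / real d) =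
              - (real (r a) * of_int (g a)) / real d + real (S s a) * (real (r a) / real d)"
          using d by (simp add: field_simps)
        then show ?thesis
          by (simp only: E_add E_nat_mult) (simp add: S_def power_sum)
      qed
      then have "(\<Prod>a<K. E (real (r a) * (of_int (int (S s a) - g a) / real d))) =
          (\<Prod>a<K. E (- (real (r a) * of_int (g a)) / real d)) * (\<Prod>a<K. \<Prod>t<q. E (real (r a) / real d) ^ s t a)"
        by (simp add: prod.distrib)
      also have "(\<Prod>a<K. E (- (real (r a) * of_int (g a)) / real d)) = E (- (\<Sum>a<K. real (r a) * of_int (g a)) / real d)"
        by (simp add: E_sum[symmetric] sum_negf sum_divide_distrib)
      also have "(\<Prod>a<K. \<Prod>t<q. E (real (r a) / real d) ^ s t a) = (\<Prod>t<q. \<Prod>a<K. E (real (r a) / real d) ^ s t a)"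
        by (rule prod.swap)
      also have "\<dots> = (\<Prod>t<q. \<Prod>a<k. E (real (r a) / real d) ^ s t a)"
        by (simp add: kK lessThan_Suc rK E_0)
      finally show ?thesis .
    qed
    have "(\<Sum>s\<in>F. complex_of_real (MP s) * (\<Prod>a<K. E (real (r a) * (of_int (int (S s a) - g a) / real d))))
        = E (- (\<Sum>a<K. real (r a) * of_int (g a)) / real d) *
          (\<Sum>s\<in>F. \<Prod>t<q. complex_of_real (multP k (i t) (s t) (\<alpha> t)) * (\<Prod>a<k. E (real (r a) / real d) ^ s t a))"
    proof -
      have "(\<Sum>s\<in>F. complex_of_real (MP s) * (\<Prod>a<K. E (real (r a) * (of_int (int (S s a) - g a) / real d))))
          = (\<Sum>s\<in>F. complex_of_real (MP s) * (E (- (\<Sum>a<K. real (r a) * of_int (g a)) / real d) *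
               (\<Prod>t<q. \<Prod>a<k. E (real (r a) / real d) ^ s t a)))"
        by (intro sum.cong refl) (simp only: e1)
      also have "\<dots> = E (- (\<Sum>a<K. real (r a) * of_int (g a)) / real d) *
          (\<Sum>s\<in>F. (\<Prod>t<q. complex_of_real (multP k (i t) (s t) (\<alpha> t))) * (\<Prod>t<q. \<Prod>a<k. E (real (r a) / real d) ^ s t a))"
        by (simp add: MP_def sum_distrib_left mult_ac)
      also have "\<dots> = E (- (\<Sum>a<K. real (r a) * of_int (g a)) / real d) *
          (\<Sum>s\<in>F. \<Prod>t<q. complex_of_real (multP k (i t) (s t) (\<alpha> t)) * (\<Prod>a<k. E (real (r a) / real d) ^ s t a))"
        by (simp only: prod.distrib)
      finally show ?thesis .
    qed
    also have "(\<Sum>s\<in>F. \<Prod>t<q. complex_of_real (multP k (i t) (s t) (\<alpha> t)) * (\<Prod>a<k. E (real (r a) / real d) ^ s t a))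
        = (\<Prod>t<q. \<Sum>u\<in>U k (i t). complex_of_real (multP k (i t) u (\<alpha> t)) * (\<Prod>a<k. E (real (r a) / real d) ^ u a))"
      unfolding F_def comp_families_Fam by (rule Fam_sum_prod) (simp add: U_finite)
    also have "\<dots> = (\<Prod>t<q. (\<Sum>a<k. complex_of_real (\<alpha> t a) * E (real (r a) / real d)) ^ i t)"
      by (simp add: multP_E multinomial)
    finally show "(\<Sum>s\<in>F. complex_of_real (MP s) * (\<Prod>a<K. E (real (r a) * (of_int (int (S s a) - g a) / real d)))) =
         E (- (\<Sum>a<K. real (r a) * of_int (g a)) / real d) *
          (\<Prod>t<q. (\<Sum>a<k. complex_of_real (\<alpha> t a) * E (real (r a) / real d)) ^ i t)" .
  qed
  finally show ?thesis by (simp add: K_def F_def R_def S_def MP_def)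
qed



lemma two_point_aux:
  fixes \<alpha> \<beta> :: real and w :: complex
  assumes "0 \<le> \<alpha>" "0 \<le> \<beta>" "\<alpha> + \<beta> \<le> 1" "norm w = 1"
  shows "norm (of_real \<alpha> * w + of_real \<beta>) \<le> \<alpha> + \<beta> - \<alpha> * \<beta> * (1 - Re w)"
proof -
  define c where "c = Re w"
  define s where "s = Im w"
  have cs: "c^2 + s^2 = 1" using assms(4) cmod_power2[of w] by (simp add: c_def s_def)
  have "\<bar>c\<bar> \<le> 1" using abs_Re_le_cmod[of w] assms(4) by (simp add: c_def)
  then have c1: "c \<le> 1" "-1 \<le> c" by auto
  have n2: "norm (of_real \<alpha> * w + of_real \<beta>) ^ 2 = \<alpha>^2 + 2*\<alpha>*\<beta>*c + \<beta>^2"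
  proof -
    have "norm (of_real \<alpha> * w + of_real \<beta>) ^ 2 = (\<alpha>*c+\<beta>)^2 + (\<alpha>*s)^2"
      unfolding cmod_power2 by (simp add: c_def s_def)
    also have "\<dots> = \<alpha>^2*(c^2+s^2) + 2*\<alpha>*\<beta>*c + \<beta>^2" by algebra
    also have "\<dots> = \<alpha>^2 + 2*\<alpha>*\<beta>*c + \<beta>^2" using cs by simp
    finally show ?thesis .
  qed
  have ab: "\<alpha> * \<beta> * (1 - c) \<le> \<alpha> + \<beta>"
  proof -
    have b1: "\<beta> \<le> 1" "\<alpha> \<le> 1" using assms by linarith+
    have "\<alpha> * \<beta> \<le> \<alpha> * 1" using assms(1) b1(1) by (rule mult_left_mono[rotated])
    moreover have "\<alpha> * \<beta> \<le> 1 * \<beta>" using assms(2) b1(2) by (rule mult_right_mono[rotated])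
    moreover have "\<alpha> * \<beta> * (1 - c) \<le> \<alpha> * \<beta> * 2" using c1 assms by (intro mult_left_mono) auto
    ultimately show ?thesis by linarith
  qed
  have X0: "0 \<le> \<alpha> + \<beta> - \<alpha> * \<beta> * (1 - c)" using ab by linarith
  have "(\<alpha> + \<beta> - \<alpha> * \<beta> * (1 - c))^2 - (\<alpha>^2 + 2*\<alpha>*\<beta>*c + \<beta>^2)
      = 2 * (\<alpha> * \<beta> * (1 - c)) * (1 - \<alpha> - \<beta>) + (\<alpha> * \<beta> * (1 - c))^2"
    by algebra
  also have "\<dots> \<ge> 0" using assms c1 by (intro add_nonneg_nonneg mult_nonneg_nonneg) auto
  finally have "norm (of_real \<alpha> * w + of_real \<beta>) ^ 2 \<le> (\<alpha> + \<beta> - \<alpha> * \<beta> * (1 - c))^2"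
    using n2 by linarith
  then have "norm (of_real \<alpha> * w + of_real \<beta>) \<le> \<alpha> + \<beta> - \<alpha> * \<beta> * (1 - c)"
    using X0 by (rule power2_le_imp_le)
  then show ?thesis by (simp add: c_def)
qed

lemma two_point:
  fixes \<alpha> :: "nat \<Rightarrow> real" and w :: "nat \<Rightarrow> complex"
  assumes B: "finite B" "a \<in> B" "b \<in> B" "a \<noteq> b"
    and pos: "\<And>x. x \<in> B \<Longrightarrow> 0 \<le> \<alpha> x" and s1: "(\<Sum>x\<in>B. \<alpha> x) = 1"
    and nw: "\<And>x. x \<in> B \<Longrightarrow> norm (w x) = 1" and wb: "w b = 1"
    and m: "0 \<le> m" "m \<le> \<alpha> a" "m \<le> \<alpha> b"
  shows "norm (\<Sum>x\<in>B. of_real (\<alpha> x) * w x) \<le> 1 - m^2 * (1 - Re (w a))"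
proof -
  define B' where "B' = B - {a, b}"
  have finB': "finite B'" using B by (simp add: B'_def)
  have decomp: "sum f B = f a + f b + sum f B'" for f :: "nat \<Rightarrow> 'z::comm_monoid_add"
  proof -
    have "B = insert a (insert b B')" "a \<notin> insert b B'" "b \<notin> B'" using B by (auto simp: B'_def)
    then show ?thesis using finB' by (simp add: add.assoc)
  qed
  have rest: "norm (\<Sum>x\<in>B'. of_real (\<alpha> x) * w x) \<le> (\<Sum>x\<in>B'. \<alpha> x)"
  proof -
    have "norm (\<Sum>x\<in>B'. of_real (\<alpha> x) * w x) \<le> (\<Sum>x\<in>B'. norm (of_real (\<alpha> x) * w x))"
      by (rule norm_sum)
    also have "\<dots> = (\<Sum>x\<in>B'. \<alpha> x)"
      by (intro sum.cong refl) (auto simp: B'_def norm_mult pos nw)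
    finally show ?thesis .
  qed
  have sab: "\<alpha> a + \<alpha> b + (\<Sum>x\<in>B'. \<alpha> x) = 1" using s1 decomp[of \<alpha>] by simp
  have nn: "0 \<le> (\<Sum>x\<in>B'. \<alpha> x)" by (intro sum_nonneg) (auto simp: B'_def pos)
  have two: "norm (of_real (\<alpha> a) * w a + of_real (\<alpha> b)) \<le> \<alpha> a + \<alpha> b - \<alpha> a * \<alpha> b * (1 - Re (w a))"
    by (rule two_point_aux) (use B pos nw sab nn in auto)
  have mm: "m^2 * (1 - Re (w a)) \<le> \<alpha> a * \<alpha> b * (1 - Re (w a))"
  proof (rule mult_right_mono)
    show "m^2 \<le> \<alpha> a * \<alpha> b" using m by (simp add: power2_eq_square mult_mono)
    show "0 \<le> 1 - Re (w a)" using complex_Re_le_cmod[of "w a"] nw B by auto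
  qed
  have "norm (\<Sum>x\<in>B. of_real (\<alpha> x) * w x)
      = norm ((of_real (\<alpha> a) * w a + of_real (\<alpha> b)) + (\<Sum>x\<in>B'. of_real (\<alpha> x) * w x))"
    using decomp[of "\<lambda>x. of_real (\<alpha> x) * w x"] wb by simp
  also have "\<dots> \<le> norm (of_real (\<alpha> a) * w a + of_real (\<alpha> b)) + norm (\<Sum>x\<in>B'. of_real (\<alpha> x) * w x)"
    by (rule norm_triangle_ineq)
  also have "\<dots> \<le> 1 - m^2 * (1 - Re (w a))" using two rest sab mm by linarith
  finally show ?thesis .
qed

lemma geo_bound:
  fixes \<mu> :: real assumes "\<mu> > 0"
  shows "(\<Sum>j\<in>{1..<d}. exp (-\<mu>) ^ j) \<le> 1 / \<mu>"
proof (cases "d = 0")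
  case True then show ?thesis using assms by simp
next
  case False
  define Q where "Q = exp (-\<mu>)"
  have Q: "0 < Q" "Q < 1" using assms by (auto simp: Q_def)
  have "(\<Sum>j<d. Q ^ j) = (Q ^ d - 1) / (Q - 1)" using Q by (intro geometric_sum) simp
  also have "\<dots> = (1 - Q ^ d) / (1 - Q)" using Q by (simp add: field_simps)
  also have "\<dots> \<le> 1 / (1 - Q)" using Q by (intro divide_right_mono) auto
  finally have s: "(\<Sum>j<d. Q ^ j) \<le> 1 / (1 - Q)" .
  have "(\<Sum>j<d. Q ^ j) = 1 + (\<Sum>j\<in>{1..<d}. Q ^ j)"
    using False by (simp add: lessThan_atLeast0 sum.atLeast_Suc_lessThan)
  then have "(\<Sum>j\<in>{1..<d}. Q ^ j) \<le> 1 / (1 - Q) - 1" using s by linarith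
  also have "\<dots> = 1 / (exp \<mu> - 1)" using Q by (simp add: Q_def field_simps exp_minus)
  also have "\<dots> \<le> 1 / \<mu>"
  proof -
    have "\<mu> \<le> exp \<mu> - 1" using exp_ge_add_one_self[of \<mu>] by linarith
    then show ?thesis using assms by (intro divide_left_mono) auto
  qed
  finally show ?thesis by (simp add: Q_def)
qed


definition gg :: "nat \<Rightarrow> nat \<Rightarrow> real" where
  "gg d j = 1 - cos (2 * pi * (real j / real d))"

lemma gg_Re: "gg d j = 1 - Re (E (real j / real d))"
  by (simp add: gg_def Re_E)

lemma gg_nonneg: "0 \<le> gg d j"
  by (simp add: gg_def)

lemma gg_0: "gg d 0 = 0"
  by (simp add: gg_def)

lemma gg_sym: assumes "j \<le> d" "d \<ge> 1" shows "gg d (d - j) = gg d j"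
proof -
  have "2 * pi * (real (d - j) / real d) = 2 * pi - 2 * pi * (real j / real d)"
    using assms by (simp add: of_nat_diff field_simps)
  then show ?thesis by (simp add: gg_def)
qed

lemma gg_lb: assumes "2 * j \<le> d" "d \<ge> 1" shows "(real j / real d)^2 \<le> gg d j"
proof -
  define y where "y = 2 * pi * (real j / real d)"
  have y0: "0 \<le> y" by (simp add: y_def)
  have "real (2 * j) \<le> real d" using assms(1) by linarith
  then have "2 * (real j / real d) \<le> 1" using assms(2) by (simp add: field_simps)
  then have "pi * (2 * (real j / real d)) \<le> pi * 1"
    by (intro mult_left_mono) auto
  then have "y \<le> pi" by (simp add: y_def mult_ac)
  from one_minus_cos_lb[OF y0 this] have "y^2/12 \<le> gg d j" by (simp add: gg_def y_def)
  moreover have "(real j / real d)^2 \<le> y^2/12"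
  proof -
    have "y^2/12 = (pi^2/3) * (real j / real d)^2" by (simp add: y_def power2_eq_square)
    moreover have "1 \<le> pi^2/3"
    proof -
      have "2^2 \<le> pi^2" using pi_ge_two by (intro power_mono) auto
      then show ?thesis by simp
    qed
    ultimately show ?thesis
      using mult_right_mono[OF \<open>1 \<le> pi^2/3\<close>, of "(real j / real d)^2"] by simp
  qed
  ultimately show ?thesis by linarith
qed

lemma exp_sq_bound: fixes x :: real shows "exp (- (x^2)) \<le> exp (1/4) * exp (- x)"
proof -
  have "x - 1/4 \<le> x^2"
  proof -
    have "0 \<le> (x - 1/2)^2" by simp
    then show ?thesis by (simp add: power2_eq_square algebra_simps)
  qed
  then have "- (x^2) \<le> 1/4 + - x" by linarith
  then show ?thesis by (simp add: exp_add[symmetric])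
qed

lemma gauss_sum:
  fixes d :: nat and c :: real
  assumes d: "d \<ge> 1" and c: "c > 0"
  shows "(\<Sum>j<d. exp (- c * gg d j)) \<le> 1 + 2 * exp (1/4) * real d / sqrt c"
proof -
  define \<mu> where "\<mu> = sqrt c / real d"
  have mu: "\<mu> > 0" using d c by (simp add: \<mu>_def)
  define Q where "Q = exp (- \<mu>)"
  have small: "exp (- c * gg d j) \<le> exp (1/4) * Q ^ j" if "2 * j \<le> d" for j
  proof -
    have "(\<mu> * real j)^2 = c * (real j / real d)^2"
      using c by (simp add: \<mu>_def power2_eq_square)
    also have "\<dots> \<le> c * gg d j" using gg_lb[OF that d] c by (intro mult_left_mono) auto
    finally have "exp (- c * gg d j) \<le> exp (- ((\<mu> * real j)^2))" by simp
    also have "\<dots> \<le> exp (1/4) * exp (- (\<mu> * real j))" by (rule exp_sq_bound)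
    also have "exp (- (\<mu> * real j)) = Q ^ j"
      unfolding Q_def exp_of_nat_mult[symmetric] by (simp add: mult.commute)
    finally show ?thesis .
  qed
  have each: "exp (- c * gg d j) \<le> exp (1/4) * (Q ^ j + Q ^ (d - j))" if "j \<in> {1..<d}" for j
  proof (cases "2 * j \<le> d")
    case True
    then have "exp (- c * gg d j) \<le> exp (1/4) * Q ^ j" by (rule small)
    also have "\<dots> \<le> exp (1/4) * (Q ^ j + Q ^ (d - j))" by (simp add: Q_def)
    finally show ?thesis .
  next
    case False
    then have "2 * (d - j) \<le> d" by linarith
    then have "exp (- c * gg d (d - j)) \<le> exp (1/4) * Q ^ (d - j)" by (rule small)
    moreover have "gg d (d - j) = gg d j" using that d by (intro gg_sym) auto
    ultimately have "exp (- c * gg d j) \<le> exp (1/4) * Q ^ (d - j)" by simp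
    also have "\<dots> \<le> exp (1/4) * (Q ^ j + Q ^ (d - j))" by (simp add: Q_def)
    finally show ?thesis .
  qed
  have rev: "(\<Sum>j\<in>{1..<d}. Q ^ (d - j)) = (\<Sum>j\<in>{1..<d}. Q ^ j)"
    by (rule sum.reindex_bij_witness[of _ "\<lambda>j. d - j" "\<lambda>j. d - j"]) auto
  have gs: "(\<Sum>j\<in>{1..<d}. Q ^ j) \<le> 1 / \<mu>" unfolding Q_def by (rule geo_bound[OF mu])
  have "(\<Sum>j<d. exp (- c * gg d j)) = 1 + (\<Sum>j\<in>{1..<d}. exp (- c * gg d j))"
    using d by (simp add: lessThan_atLeast0 sum.atLeast_Suc_lessThan gg_0)
  also have "(\<Sum>j\<in>{1..<d}. exp (- c * gg d j)) \<le> (\<Sum>j\<in>{1..<d}. exp (1/4) * (Q ^ j + Q ^ (d - j)))"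
    by (rule sum_mono) (rule each)
  also have "\<dots> = exp (1/4) * (\<Sum>j\<in>{1..<d}. Q ^ j + Q ^ (d - j))"
    by (simp add: sum_distrib_left)
  also have "\<dots> = exp (1/4) * ((\<Sum>j\<in>{1..<d}. Q ^ j) + (\<Sum>j\<in>{1..<d}. Q ^ (d - j)))"
    by (simp only: sum.distrib)
  also have "\<dots> = exp (1/4) * (2 * (\<Sum>j\<in>{1..<d}. Q ^ j))" unfolding rev by simp
  also have "\<dots> \<le> exp (1/4) * (2 * (1 / \<mu>))" using gs by (intro mult_left_mono) auto
  also have "exp (1/4) * (2 * (1 / \<mu>)) = 2 * exp (1/4) * real d / sqrt c"
    by (simp add: \<mu>_def)
  finally show ?thesis by simp
qed

lemma pow_diff_le:
  fixes x y :: real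
  assumes "0 \<le> y" "y \<le> x" "x \<le> 1"
  shows "x ^ K - y ^ K \<le> real K * (x - y)"
proof (induction K)
  case 0 then show ?case by simp
next
  case (Suc K)
  have "x ^ Suc K - y ^ Suc K = x * (x ^ K - y ^ K) + (x - y) * y ^ K"
    by (simp add: algebra_simps)
  also have "x * (x ^ K - y ^ K) \<le> 1 * (real K * (x - y))"
  proof (rule mult_mono)
    show "0 \<le> x ^ K - y ^ K" using assms by (simp add: power_mono)
  qed (use assms Suc in auto)
  also have "(x - y) * y ^ K \<le> (x - y) * 1"
    using assms by (intro mult_left_mono) (auto simp: power_le_one)
  finally show ?case by (simp add: algebra_simps)
qed

lemma phi_bound:
  fixes \<alpha> :: "nat \<Rightarrow> real" and r :: "nat \<Rightarrow> nat"
  assumes kK: "k = Suc K" and K: "K \<ge> 1" and m: "m > 0" "\<And>a. a < k \<Longrightarrow> m \<le> \<alpha> a"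
    and s1: "(\<Sum>a<k. \<alpha> a) = 1" and rK: "r K = 0"
  shows "norm (\<Sum>a<k. of_real (\<alpha> a) * E (real (r a) / real d)) \<le> 1 - (m^2 / real K) * (\<Sum>a<K. gg d (r a))"
proof -
  let ?phi = "\<Sum>a<k. of_real (\<alpha> a) * E (real (r a) / real d)"
  have pos: "0 \<le> \<alpha> x" if "x \<in> {..<k}" for x
  proof -
    have "m \<le> \<alpha> x" using m(2) that by auto
    then show ?thesis using m(1) by linarith
  qed
  have one: "norm ?phi \<le> 1 - m^2 * gg d (r a)" if "a < K" for a
  proof -
    have "norm ?phi \<le> 1 - m^2 * (1 - Re (E (real (r a) / real d)))"
    proof (rule two_point[where b = K])
      show "\<And>x. x \<in> {..<k} \<Longrightarrow> 0 \<le> \<alpha> x" by (rule pos)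
      show "E (real (r K) / real d) = 1" by (simp add: rK E_0)
      show "m \<le> \<alpha> a" "m \<le> \<alpha> K" using m that kK by auto
    qed (use that kK s1 m in auto)
    then show ?thesis by (simp add: gg_Re)
  qed
  have "real K * norm ?phi = (\<Sum>a<K. norm ?phi)" by simp
  also have "\<dots> \<le> (\<Sum>a<K. 1 - m^2 * gg d (r a))" by (rule sum_mono) (rule one, simp)
  also have "\<dots> = real K - m^2 * (\<Sum>a<K. gg d (r a))"
    by (simp add: sum_subtractf sum_distrib_left)
  finally have "real K * norm ?phi \<le> real K - m^2 * (\<Sum>a<K. gg d (r a))" .
  then show ?thesis using K by (simp add: field_simps)
qed


theorem lemma2p4:
  fixes q k :: nat and \<alpha> :: "nat \<Rightarrow> nat \<Rightarrow> real"
  assumes "q \<ge> 1" and "k \<ge> 2"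
    and "\<And>t a. t < q \<Longrightarrow> a < k \<Longrightarrow> 0 < \<alpha> t a \<and> \<alpha> t a < 1"
    and "\<And>t. t < q \<Longrightarrow> (\<Sum>a<k. \<alpha> t a) = 1"
  shows "\<exists>C::real. \<exists>N::nat. \<forall>n d. \<forall>g :: nat \<Rightarrow> int. \<forall>i :: nat \<Rightarrow> nat.
           n \<ge> N \<longrightarrow> d \<ge> 1 \<longrightarrow> (\<forall>t<q. i t \<le> n) \<longrightarrow> (\<Sum>t<q. i t) = n \<longrightarrow>
           \<bar>(\<Sum>s \<in> {s \<in> comp_families q k i.
                      \<forall>a<k-1. [int (\<Sum>t<q. s t a) = g a] (mod int d)}.
               \<Prod>t<q. multP k (i t) (s t) (\<alpha> t))
            - 1 / real d ^ (k - 1)\<bar> \<le> C * ln (real n) / sqrt (real n)"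
proof -
  define K where "K = k - 1"
  have kK: "k = Suc K" and K1: "K \<ge> 1" using assms(2) by (auto simp: K_def)
  define Aset where "Aset = (\<lambda>(t,a). \<alpha> t a) ` ({..<q} \<times> {..<k})"
  have finA: "finite Aset" by (simp add: Aset_def)
  have neA: "Aset \<noteq> {}" using assms(1,2) by (auto simp: Aset_def lessThan_empty_iff)
  define m where "m = Min Aset"
  have m_le: "m \<le> \<alpha> t a" if "t < q" "a < k" for t a
    unfolding m_def using finA that by (intro Min_le) (auto simp: Aset_def)
  have m_pos: "m > 0"
  proof -
    have "m \<in> Aset" unfolding m_def using finA neA by (rule Min_in)
    then obtain t a where "t < q" "a < k" "m = \<alpha> t a" by (auto simp: Aset_def)
    then show ?thesis using assms(3) by auto
  qed
  define \<gamma> where "\<gamma> = m^2 / real K"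
  have \<gamma>_pos: "\<gamma> > 0" using m_pos K1 by (simp add: \<gamma>_def)
  define C where "C = real K * (2 * exp (1/4) / sqrt \<gamma>)"
  have C_nn: "C \<ge> 0" using \<gamma>_pos by (simp add: C_def)
  show ?thesis
  proof (intro exI[of _ C] exI[of _ 3] allI impI)
    fix n d :: nat and g :: "nat \<Rightarrow> int" and i :: "nat \<Rightarrow> nat"
    assume n: "3 \<le> n" and d: "1 \<le> d" and ile: "\<forall>t<q. i t \<le> n" and isum: "(\<Sum>t<q. i t) = n"
    define P where "P = (\<Sum>s \<in> {s \<in> comp_families q k i.
                      \<forall>a<k-1. [int (\<Sum>t<q. s t a) = g a] (mod int d)}.
               \<Prod>t<q. multP k (i t) (s t) (\<alpha> t))"
    define R where "R = Fam K (0::nat) (\<lambda>_. {..<d})"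
    define \<phi> where "\<phi> t r = (\<Sum>a<k. complex_of_real (\<alpha> t a) * E (real (r a) / real d))"
      for t and r :: "nat \<Rightarrow> nat"
    define T where "T r = E (- (\<Sum>a<K. real (r a) * of_int (g a)) / real d) * (\<Prod>t<q. \<phi> t r ^ i t)"
      for r :: "nat \<Rightarrow> nat"
    define h where "h j = exp (- (\<gamma> * real n) * gg d j)" for j
    have expand: "complex_of_real P = (1 / of_nat d ^ K) * (\<Sum>r\<in>R. T r)"
      unfolding P_def R_def T_def \<phi>_def K_def by (rule char_expansion[OF d]) (use assms(2) in simp)
    have finR: "finite R" unfolding R_def by (rule Fam_finite) simp
    have z0: "(\<lambda>_. 0) \<in> R" using d by (simp add: R_def Fam_def)
    have phi0: "\<phi> t (\<lambda>_. 0) = 1" if "t < q" for t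
    proof -
      have "\<phi> t (\<lambda>_. 0) = (\<Sum>a<k. complex_of_real (\<alpha> t a))" by (simp add: \<phi>_def E_0)
      also have "\<dots> = complex_of_real (\<Sum>a<k. \<alpha> t a)" by simp
      also have "\<dots> = 1" using assms(4)[OF that] by simp
      finally show ?thesis .
    qed
    have T0: "T (\<lambda>_. 0) = 1" by (simp add: T_def E_0 phi0)
    have n_pos: "real n > 0" using n by simp
    have Tb: "norm (T r) \<le> (\<Prod>a<K. h (r a))" if r: "r \<in> R" for r
    proof -
      have rK: "r K = 0" using r by (simp add: R_def Fam_def)
      define G where "G = (\<Sum>a<K. gg d (r a))"
      have pb: "norm (\<phi> t r) \<le> exp (- \<gamma> * G)" if t: "t < q" for t
      proof -
        have "norm (\<phi> t r) \<le> 1 - (m^2 / real K) * G"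
          unfolding \<phi>_def G_def
          using phi_bound[where \<alpha>="\<alpha> t" and r=r and d=d, OF kK K1 m_pos m_le[OF t] assms(4)[OF t] rK] .
        also have "\<dots> = 1 + (- \<gamma> * G)" by (simp add: \<gamma>_def)
        also have "\<dots> \<le> exp (- \<gamma> * G)" by (rule exp_ge_add_one_self)
        finally show ?thesis .
      qed
      have "norm (T r) = (\<Prod>t<q. norm (\<phi> t r) ^ i t)"
        by (simp add: T_def norm_mult prod_norm[symmetric] norm_power)
      also have "\<dots> \<le> (\<Prod>t<q. exp (- \<gamma> * G) ^ i t)"
        by (intro prod_mono conjI zero_le_power norm_ge_zero power_mono pb) auto
      also have "\<dots> = (\<Prod>t<q. exp (real (i t) * (- \<gamma> * G)))"
        by (simp only: exp_of_nat_mult)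
      also have "\<dots> = exp (\<Sum>t<q. real (i t) * (- \<gamma> * G))"
        by (simp add: exp_sum)
      also have "(\<Sum>t<q. real (i t) * (- \<gamma> * G)) = (\<Sum>a<K. - (\<gamma> * real n) * gg d (r a))"
      proof -
        have "(\<Sum>t<q. real (i t) * (- \<gamma> * G)) = real (\<Sum>t<q. i t) * (- \<gamma> * G)"
          by (simp only: sum_distrib_right of_nat_sum)
        also have "\<dots> = - (\<gamma> * real n) * G" using isum by simp
        also have "\<dots> = (\<Sum>a<K. - (\<gamma> * real n) * gg d (r a))"
          by (simp add: G_def sum_distrib_left)
        finally show ?thesis .
      qed
      also have "exp (\<Sum>a<K. - (\<gamma> * real n) * gg d (r a)) = (\<Prod>a<K. h (r a))"
        by (simp add: exp_sum h_def)
      finally show ?thesis .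
    qed
    have h0: "h 0 = 1" by (simp add: h_def gg_0)
    have h_nn: "0 \<le> h j" for j by (simp add: h_def)
    have h_le1: "h j \<le> 1" for j
    proof -
      have "0 \<le> (\<gamma> * real n) * gg d j" using \<gamma>_pos gg_nonneg[of d j] by simp
      then show ?thesis by (simp add: h_def)
    qed
    have sumR: "(\<Sum>r\<in>R. \<Prod>a<K. h (r a)) = (\<Sum>j<d. h j) ^ K"
      unfolding R_def using Fam_sum_prod[where q=K and A="\<lambda>_. {..<d}" and f="\<lambda>_. h" and z=0] by simp
    have splitT: "(\<Sum>r\<in>R. T r) = 1 + (\<Sum>r\<in>R - {\<lambda>_. 0}. T r)"
      using sum.remove[OF finR z0, of T] T0 by simp
    have splitH: "(\<Sum>r\<in>R. \<Prod>a<K. h (r a)) = 1 + (\<Sum>r\<in>R - {\<lambda>_. 0}. \<Prod>a<K. h (r a))"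
      using sum.remove[OF finR z0, of "\<lambda>r. \<Prod>a<K. h (r a)"] h0 by simp
    define H where "H = (\<Sum>j<d. h j) / real d"
    have dpos: "real d > 0" using d by simp
    have H_ge: "1 / real d \<le> H"
    proof -
      have "h 0 \<le> (\<Sum>j<d. h j)" using d by (intro member_le_sum h_nn) auto
      then show ?thesis using dpos h0 by (simp add: H_def divide_right_mono)
    qed
    have H_le1: "H \<le> 1"
    proof -
      have "(\<Sum>j<d. h j) \<le> real (card {..<d}) * 1" by (rule sum_bounded_above) (rule h_le1)
      then show ?thesis using dpos by (simp add: H_def)
    qed
    have H_up: "H - 1 / real d \<le> 2 * exp (1/4) / sqrt (\<gamma> * real n)"
    proof -
      have "(\<Sum>j<d. h j) \<le> 1 + 2 * exp (1/4) * real d / sqrt (\<gamma> * real n)"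
        unfolding h_def by (rule gauss_sum[OF d]) (use \<gamma>_pos n_pos in simp)
      then have "H \<le> (1 + 2 * exp (1/4) * real d / sqrt (\<gamma> * real n)) / real d"
        unfolding H_def using dpos by (simp add: divide_right_mono)
      also have "\<dots> = 1 / real d + 2 * exp (1/4) / sqrt (\<gamma> * real n)"
        using dpos by (simp add: field_simps)
      finally show ?thesis by simp
    qed
    have "complex_of_real (P - 1 / real d ^ K) = (1 / of_nat d ^ K) * (\<Sum>r\<in>R - {\<lambda>_. 0}. T r)"
      using expand splitT dpos by (simp add: field_simps)
    then have "\<bar>P - 1 / real d ^ K\<bar> = norm ((1 / of_nat d ^ K) * (\<Sum>r\<in>R - {\<lambda>_. 0}. T r))"
      by (metis norm_of_real)
    also have "\<dots> = (1 / real d ^ K) * norm (\<Sum>r\<in>R - {\<lambda>_. 0}. T r)"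
      by (simp add: norm_mult norm_divide norm_power)
    also have "\<dots> \<le> (1 / real d ^ K) * (\<Sum>r\<in>R - {\<lambda>_. 0}. \<Prod>a<K. h (r a))"
    proof (rule mult_left_mono)
      have "norm (\<Sum>r\<in>R - {\<lambda>_. 0}. T r) \<le> (\<Sum>r\<in>R - {\<lambda>_. 0}. norm (T r))" by (rule norm_sum)
      also have "\<dots> \<le> (\<Sum>r\<in>R - {\<lambda>_. 0}. \<Prod>a<K. h (r a))" by (rule sum_mono) (rule Tb, simp)
      finally show "norm (\<Sum>r\<in>R - {\<lambda>_. 0}. T r) \<le> (\<Sum>r\<in>R - {\<lambda>_. 0}. \<Prod>a<K. h (r a))" .
    qed simp
    also have "\<dots> = (1 / real d ^ K) * ((\<Sum>j<d. h j) ^ K - 1)"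
      using splitH sumR by simp
    also have "\<dots> = H ^ K - (1 / real d) ^ K"
      using dpos by (simp add: H_def power_divide field_simps)
    also have "\<dots> \<le> real K * (H - 1 / real d)"
      by (rule pow_diff_le) (use H_ge H_le1 dpos in auto)
    also have "\<dots> \<le> real K * (2 * exp (1/4) / sqrt (\<gamma> * real n))"
      using H_up by (intro mult_left_mono) auto
    also have "\<dots> = C / sqrt (real n)"
      by (simp add: C_def real_sqrt_mult)
    also have "\<dots> \<le> C * ln (real n) / sqrt (real n)"
    proof -
      have "1 \<le> ln (real n)"
      proof -
        have "exp 1 \<le> real n" using exp_le n by linarith
        then show ?thesis using n by (simp add: ln_ge_iff)
      qed
      then have "C * 1 \<le> C * ln (real n)" using C_nn by (intro mult_left_mono) auto
      then show ?thesis using n_pos by (simp add: divide_right_mono)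
    qed
    finally show "\<bar>(\<Sum>s \<in> {s \<in> comp_families q k i.
                      \<forall>a<k-1. [int (\<Sum>t<q. s t a) = g a] (mod int d)}.
               \<Prod>t<q. multP k (i t) (s t) (\<alpha> t))
            - 1 / real d ^ (k - 1)\<bar> \<le> C * ln (real n) / sqrt (real n)"
      unfolding P_def K_def .
  qed
qed

end
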